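(* As $d \to \infty$, \[ m_{\mathcal S}(d) \geq (1+o(1))\frac{\log d}{\log \log d}, \] where $\mathcal S$ is the class of star forests. In other words, there is a function $\varepsilon(d) \to 0$ as $d\to\infty$ such that for every $d$ there exists a family of at least $(1+\varepsilon(d))\frac{\log d}{\log\log d}$ star forests (minus one) — more precisely, a family of $m_{\mathcal S}(d)-1$ star forests — showing that $m_{\mathcal S}(d) \geq (1+\varepsilon(d))\frac{\log d}{\log \log d}$.
   Context: All graphs are finite. Given a family $\mathcal G = \{G_1,\dots,G_k\}$ of graphs all spanning a common vertex set $V$, a cooperative coloring of $\mathcal G$ is a family of sets $R_1,\dots,R_k \subseteq V$ such that each $R_i$ is an independent set of $G_i$ and $V = \bigcup_{i=1}^k R_i$. For a graph class $\mathcal H$, $m_{\mathcal H}(d)$ denotes the minimum value $m$ such that every family $\mathcal G$ of at least $m$ graphs from $\mathcal H$, each of maximum degree at most $d$, spanning a common vertex set, has a cooperative coloring. A star forest is a graph each of whose connected components is a star (a tree with at most one vertex of degree greater than $1$). $\mathcal S$ denotes the class of star forests. Logarithms are natural, and asymptotic notation is as $d \to \infty$. *)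

theory Defs
  imports "HOL-Analysis.Analysis"
begin

text \<open>Simple graphs on a finite vertex set V (vertices taken from nat, which is
no loss of generality since every finite graph is isomorphic to one on nat),
given by a symmetric irreflexive edge relation supported on V.\<close>

definition graph_on :: "nat set \<Rightarrow> (nat \<Rightarrow> nat \<Rightarrow> bool) \<Rightarrow> bool" where
  "graph_on V E \<longleftrightarrow> (\<forall>u v. E u v \<longrightarrow> u \<in> V \<and> v \<in> V) \<and> (\<forall>u v. E u v \<longrightarrow> E v u) \<and> (\<forall>u. \<not> E u u)"

definition connected_set :: "(nat \<Rightarrow> nat \<Rightarrow> bool) \<Rightarrow> nat set \<Rightarrow> bool" where
  "connected_set E C \<longleftrightarrow> C \<noteq> {} \<and>
     (\<forall>u\<in>C. \<forall>v\<in>C. (\<lambda>x y. E x y \<and> x \<in> C \<and> y \<in> C)\<^sup>*\<^sup>* u v)"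

definition is_cycle :: "(nat \<Rightarrow> nat \<Rightarrow> bool) \<Rightarrow> nat list \<Rightarrow> bool" where
  "is_cycle E xs \<longleftrightarrow> length xs \<ge> 3 \<and> distinct xs \<and>
     (\<forall>i < length xs. E (xs ! i) (xs ! ((i + 1) mod length xs)))"

definition acyclic_on :: "(nat \<Rightarrow> nat \<Rightarrow> bool) \<Rightarrow> nat set \<Rightarrow> bool" where
  "acyclic_on E C \<longleftrightarrow> \<not> (\<exists>xs. set xs \<subseteq> C \<and> is_cycle E xs)"

definition is_tree :: "(nat \<Rightarrow> nat \<Rightarrow> bool) \<Rightarrow> nat set \<Rightarrow> bool" where
  "is_tree E C \<longleftrightarrow> connected_set E C \<and> acyclic_on E C"

definition is_star :: "(nat \<Rightarrow> nat \<Rightarrow> bool) \<Rightarrow> nat set \<Rightarrow> bool" where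
  "is_star E C \<longleftrightarrow> is_tree E C \<and> card {v \<in> C. card {u \<in> C. E v u} > 1} \<le> 1"

definition component :: "nat set \<Rightarrow> (nat \<Rightarrow> nat \<Rightarrow> bool) \<Rightarrow> nat \<Rightarrow> nat set" where
  "component V E v = {u \<in> V. E\<^sup>*\<^sup>* v u}"

definition star_forest :: "nat set \<Rightarrow> (nat \<Rightarrow> nat \<Rightarrow> bool) \<Rightarrow> bool" where
  "star_forest V E \<longleftrightarrow> graph_on V E \<and> (\<forall>v\<in>V. is_star E (component V E v))"

definition max_deg_le :: "nat set \<Rightarrow> (nat \<Rightarrow> nat \<Rightarrow> bool) \<Rightarrow> nat \<Rightarrow> bool" where
  "max_deg_le V E d \<longleftrightarrow> (\<forall>v\<in>V. card {u \<in> V. E v u} \<le> d)"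

definition independent :: "(nat \<Rightarrow> nat \<Rightarrow> bool) \<Rightarrow> nat set \<Rightarrow> bool" where
  "independent E R \<longleftrightarrow> (\<forall>u\<in>R. \<forall>v\<in>R. \<not> E u v)"

definition coop_coloring :: "nat set \<Rightarrow> (nat \<Rightarrow> nat \<Rightarrow> nat \<Rightarrow> bool) \<Rightarrow> nat \<Rightarrow> bool" where
  "coop_coloring V G k \<longleftrightarrow> (\<exists>R :: nat \<Rightarrow> nat set.
     (\<forall>i<k. R i \<subseteq> V \<and> independent (G i) (R i)) \<and> V = (\<Union>i<k. R i))"

definition mS_good :: "nat \<Rightarrow> nat \<Rightarrow> bool" where
  "mS_good d m \<longleftrightarrow> (\<forall>(V :: nat set) (k :: nat) (G :: nat \<Rightarrow> nat \<Rightarrow> nat \<Rightarrow> bool).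
      finite V \<and> k \<ge> m \<and> (\<forall>i<k. star_forest V (G i) \<and> max_deg_le V (G i) d)
      \<longrightarrow> coop_coloring V G k)"

definition mS :: "nat \<Rightarrow> nat" where
  "mS d = (LEAST m. mS_good d m)"

end

theory Submission
  imports Defs "HOL-Library.Countable" "HOL-Real_Asymp.Real_Asymp"
begin

lemma star_forest_crit:
  fixes V :: "nat set" and E :: "nat \<Rightarrow> nat \<Rightarrow> bool" and cen :: "nat \<Rightarrow> bool"
  assumes g: "graph_on V E"
    and alt: "\<And>u v. E u v \<Longrightarrow> (cen u \<longleftrightarrow> \<not> cen v)"
    and uniq: "\<And>u v w. \<not> cen u \<Longrightarrow> E u v \<Longrightarrow> E u w \<Longrightarrow> v = w"
  shows "star_forest V E"
proof -
  have inV: "E u v \<Longrightarrow> u \<in> V \<and> v \<in> V" for u v using g unfolding graph_on_def by blast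
  have sym: "E u v \<Longrightarrow> E v u" for u v using g unfolding graph_on_def by blast
  define r where "r u = (if cen u \<or> \<not> (\<exists>v. E u v) then u else (THE v. E u v))" for u
  have r1: "r u = v" if "\<not> cen u" "E u v" for u v
  proof -
    have "(THE v. E u v) = v" using that uniq by (intro the_equality) blast+
    then show ?thesis using that unfolding r_def by auto
  qed
  have r2: "cen u \<Longrightarrow> r u = u" for u unfolding r_def by auto
  have step: "r a = r b" if "E a b" for a b
  proof (cases "cen a")
    case True
    then have "\<not> cen b" using alt that by blast
    then have "r b = a" using r1 sym that by blast
    then show ?thesis using r2 True by simp
  next
    case False
    then have "cen b" using alt that by blast
    then show ?thesis using r1 r2 False that by simp
  qed
  have rt: "E\<^sup>*\<^sup>* a b \<Longrightarrow> r a = r b" for a b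
    by (induction rule: rtranclp_induct) (auto dest: step)
  have Erv: "r u = u \<or> E u (r u)" for u
  proof (cases "cen u \<or> \<not> (\<exists>v. E u v)")
    case True then show ?thesis unfolding r_def by auto
  next
    case False
    then obtain v where "E u v" "\<not> cen u" by blast
    then show ?thesis using r1 by auto
  qed
  have rr: "r (r u) = r u" for u using Erv[of u] step by metis
  have rV: "u \<in> V \<Longrightarrow> r u \<in> V" for u using Erv[of u] inV by metis
  have comp: "component V E v = {u\<in>V. r u = r v}" for v
  proof
    show "component V E v \<subseteq> {u\<in>V. r u = r v}" unfolding component_def using rt by auto
    show "{u\<in>V. r u = r v} \<subseteq> component V E v"
    proof
      fix u assume u: "u \<in> {u\<in>V. r u = r v}"
      have a: "E\<^sup>*\<^sup>* v (r v)" using Erv[of v] by (metis r_into_rtranclp rtranclp.rtrancl_refl)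
      have b: "E\<^sup>*\<^sup>* (r u) u" using Erv[of u] sym by (metis r_into_rtranclp rtranclp.rtrancl_refl)
      show "u \<in> component V E v" using a b u unfolding component_def by auto
    qed
  qed
  show ?thesis unfolding star_forest_def
  proof (intro conjI g ballI)
    fix v assume v: "v \<in> V"
    define C where "C = component V E v"
    define \<rho> where "\<rho> = r v"
    have C: "C = {u\<in>V. r u = \<rho>}" unfolding C_def \<rho>_def comp ..
    have \<rho>C: "\<rho> \<in> C" unfolding C using rV v rr \<rho>_def by auto
    have nonroot: "y = \<rho>" if "x \<in> C" "x \<noteq> \<rho>" "E x y" for x y
    proof -
      have "r x = \<rho>" using that C by auto
      then have "\<not> cen x" using r2 that by metis
      then show ?thesis using r1 that \<open>r x = \<rho>\<close> by metis
    qed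
    have conn: "connected_set E C"
      unfolding connected_set_def
    proof (intro conjI ballI)
      show "C \<noteq> {}" using \<rho>C by auto
      fix a b assume ab: "a \<in> C" "b \<in> C"
      let ?R = "\<lambda>x y. E x y \<and> x \<in> C \<and> y \<in> C"
      have "a = \<rho> \<or> ?R a \<rho>" using Erv[of a] ab \<rho>C C by auto
      then have 1: "?R\<^sup>*\<^sup>* a \<rho>" by auto
      have "b = \<rho> \<or> ?R \<rho> b" using Erv[of b] ab \<rho>C C sym by auto
      then have 2: "?R\<^sup>*\<^sup>* \<rho> b" by auto
      show "?R\<^sup>*\<^sup>* a b" using 1 2 by auto
    qed
    have acyc: "acyclic_on E C"
      unfolding acyclic_on_def
    proof
      assume "\<exists>xs. set xs \<subseteq> C \<and> is_cycle E xs"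
      then obtain xs where xs: "set xs \<subseteq> C" "length xs \<ge> 3" "distinct xs"
        "\<forall>i < length xs. E (xs ! i) (xs ! ((i + 1) mod length xs))"
        unfolding is_cycle_def by blast
      let ?n = "length xs"
      have inC: "i < ?n \<Longrightarrow> xs ! i \<in> C" for i using xs(1) nth_mem by blast
      have e: "E (xs ! i) (xs ! ((i + 1) mod ?n))" if "i < ?n" for i using xs(4) that by blast
      have d: "xs ! i \<noteq> xs ! j" if "i < ?n" "j < ?n" "i \<noteq> j" for i j
        using xs(3) that nth_eq_iff_index_eq by blast
      show False
      proof (cases "xs ! 1 = \<rho>")
        case True
        have "xs ! 2 \<noteq> \<rho>" using True d[of 1 2] xs(2) by auto
        moreover have "E (xs ! 2) (xs ! (3 mod ?n))" using e[of 2] xs(2) by auto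
        ultimately have "xs ! (3 mod ?n) = \<rho>" using nonroot[of "xs ! 2"] inC[of 2] xs(2) by auto
        moreover have "3 mod ?n \<noteq> 1"
        proof (cases "?n = 3")
          case True then show ?thesis by simp
        next
          case False then show ?thesis using xs(2) by simp
        qed
        moreover have "3 mod ?n < ?n" using xs(2) by (intro mod_less_divisor) linarith
        ultimately show False using True d[of "3 mod ?n" 1] xs(2) by auto
      next
        case False
        have "E (xs ! 1) (xs ! 2)" using e[of 1] xs(2) by (auto simp: numeral_2_eq_2)
        then have c: "xs ! 2 = \<rho>" using nonroot[of "xs ! 1" "xs ! 2"] inC[of 1] xs(2) False by auto
        have ne: "xs \<noteq> []" using xs(2) by auto
        have "xs ! 0 \<noteq> \<rho>" using c d[of 0 2] xs(2) ne by auto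
        moreover have "E (xs ! 0) (xs ! 1)" using e[of 0] xs(2) ne by auto
        ultimately show False using nonroot[of "xs ! 0" "xs ! 1"] inC[of 0] ne False by auto
      qed
    qed
    have "{x\<in>C. card {u\<in>C. E x u} > 1} \<subseteq> {\<rho>}"
    proof
      fix x assume x: "x \<in> {x\<in>C. card {u\<in>C. E x u} > 1}"
      show "x \<in> {\<rho>}"
      proof (rule ccontr)
        assume "x \<notin> {\<rho>}"
        then have "{u\<in>C. E x u} \<subseteq> {\<rho>}" using nonroot x by auto
        then have "card {u\<in>C. E x u} \<le> 1" using card_mono[of "{\<rho>}"] by fastforce
        then show False using x by auto
      qed
    qed
    then have "card {x\<in>C. card {u\<in>C. E x u} > 1} \<le> 1" using card_mono[of "{\<rho>}"] by fastforce
    then show "is_star E (component V E v)"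
      unfolding is_star_def is_tree_def C_def[symmetric] using conn acyc by blast
  qed
qed

lemma sf_no_big_edge:
  assumes finV: "finite V" and sf: "star_forest V E" and uw: "E u w"
    and du: "2 \<le> card {y\<in>V. E u y}" and dw: "2 \<le> card {y\<in>V. E w y}"
  shows False
proof -
  have g: "graph_on V E" using sf unfolding star_forest_def by blast
  have inV: "E a b \<Longrightarrow> a \<in> V \<and> b \<in> V" for a b using g unfolding graph_on_def by blast
  have irr: "\<not> E a a" for a using g unfolding graph_on_def by blast
  define C where "C = component V E u"
  have "is_star E C" using sf inV uw unfolding star_forest_def C_def by blast
  then have cs: "card {v\<in>C. card {y\<in>C. E v y} > 1} \<le> 1" unfolding is_star_def by blast
  have uC: "u \<in> C" using inV uw unfolding C_def component_def by auto
  have wC: "w \<in> C" using inV uw unfolding C_def component_def by auto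
  have nu: "{y\<in>C. E u y} = {y\<in>V. E u y}"
    unfolding C_def component_def using inV by auto
  have nw: "{y\<in>C. E w y} = {y\<in>V. E w y}"
    unfolding C_def component_def using inV uw
    by (auto intro: rtranclp.rtrancl_into_rtrancl[OF r_into_rtranclp])
  have "{u, w} \<subseteq> {v\<in>C. card {y\<in>C. E v y} > 1}" using uC wC nu nw du dw by auto
  moreover have "finite {v\<in>C. card {y\<in>C. E v y} > 1}"
    using finV unfolding C_def component_def by auto
  ultimately have "card {u, w} \<le> 1" using cs card_mono by (metis (no_types, lifting) le_trans)
  moreover have "u \<noteq> w" using irr uw by auto
  ultimately show False by auto
qed


lemma hall_aux:
  fixes I :: "'a set"
  assumes finI: "finite I"
  shows "\<forall>A :: 'a \<Rightarrow> 'b set. (\<forall>i\<in>I. finite (A i)) \<longrightarrow> (\<forall>F\<subseteq>I. card F \<le> card (\<Union>(A ` F)))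
     \<longrightarrow> (\<Sum>i\<in>I. card (A i)) = n \<longrightarrow> (\<exists>f. (\<forall>i\<in>I. f i \<in> A i) \<and> inj_on f I)"
proof (induction n rule: less_induct)
  case (less n)
  show ?case
  proof (intro allI impI)
    fix A :: "'a \<Rightarrow> 'b set"
    assume fin: "\<forall>i\<in>I. finite (A i)" and H: "\<forall>F\<subseteq>I. card F \<le> card (\<Union>(A ` F))"
      and sn: "(\<Sum>i\<in>I. card (A i)) = n"
    show "\<exists>f. (\<forall>i\<in>I. f i \<in> A i) \<and> inj_on f I"
    proof (cases "\<exists>i\<in>I. 2 \<le> card (A i)")
      case False
      have one: "card (A i) = Suc 0" if "i \<in> I" for i
      proof -
        have "card {i} \<le> card (\<Union>(A ` {i}))" using H[rule_format, of "{i}"] that by simp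
        then have "1 \<le> card (A i)" by simp
        moreover have "\<not> 2 \<le> card (A i)" using False that by blast
        ultimately show ?thesis by linarith
      qed
      define f where "f i = the_elem (A i)" for i
      have fA: "A i = {f i}" if iI: "i \<in> I" for i
      proof -
        have "\<exists>x. A i = {x}" using one[OF iI] by (simp add: card_1_singleton_iff)
        then obtain x where x: "A i = {x}" by blast
        have "f i = x" unfolding f_def using x by simp
        then show ?thesis using x by simp
      qed
      show ?thesis
      proof (intro exI conjI)
        show "\<forall>i\<in>I. f i \<in> A i"
        proof
          fix i assume "i \<in> I"
          then show "f i \<in> A i" using fA[of i] by blast
        qed
        show "inj_on f I"
        proof (rule inj_onI, rule ccontr)
          fix i j assume ij: "i \<in> I" "j \<in> I" "f i = f j" "i \<noteq> j"
          have ijI: "{i, j} \<subseteq> I" using ij by simp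
          have "card {i, j} \<le> card (\<Union>(A ` {i, j}))" using H ijI by blast
          also have "\<Union>(A ` {i, j}) = {f i}" using fA[of i] fA[of j] ij by simp
          finally show False using ij by auto
        qed
      qed
    next
      case True
      then obtain i where i: "i \<in> I" "2 \<le> card (A i)" by blast
      then have "A i \<noteq> {}" by auto
      then obtain x1 where x1: "x1 \<in> A i" by blast
      have "card (A i - {x1}) \<ge> 1" using i x1 fin by auto
      then have "A i - {x1} \<noteq> {}" by (metis card.empty not_one_le_zero)
      then obtain x2 where x2: "x2 \<in> A i" "x2 \<noteq> x1" by blast
      define A1 where "A1 = A(i := A i - {x1})"
      define A2 where "A2 = A(i := A i - {x2})"
      have key: "(\<forall>F\<subseteq>I. card F \<le> card (\<Union>(A1 ` F))) \<or> (\<forall>F\<subseteq>I. card F \<le> card (\<Union>(A2 ` F)))"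
      proof (rule ccontr)
        assume "\<not> ?thesis"
        then obtain F1 F2 where F1: "F1 \<subseteq> I" "card (\<Union>(A1 ` F1)) < card F1"
          and F2: "F2 \<subseteq> I" "card (\<Union>(A2 ` F2)) < card F2"
          by (meson not_le)
        have iF1: "i \<in> F1"
        proof (rule ccontr)
          assume "i \<notin> F1"
          then have "A1 ` F1 = A ` F1" unfolding A1_def by auto
          then show False using F1(2) H[rule_format, OF F1(1)] by simp
        qed
        have iF2: "i \<in> F2"
        proof (rule ccontr)
          assume "i \<notin> F2"
          then have "A2 ` F2 = A ` F2" unfolding A2_def by auto
          then show False using F2(2) H[rule_format, OF F2(1)] by simp
        qed
        define G1 where "G1 = F1 - {i}"
        define G2 where "G2 = F2 - {i}"
        have finF1: "finite F1" using F1 finI finite_subset by blast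
        have finF2: "finite F2" using F2 finI finite_subset by blast
        have finG1: "finite G1" "finite G2" using finF1 finF2 G1_def G2_def by auto
        have cF1: "card F1 = card G1 + 1" using card_Suc_Diff1[OF finF1 iF1] unfolding G1_def
          by simp
        have cF2: "card F2 = card G2 + 1" using card_Suc_Diff1[OF finF2 iF2] unfolding G2_def
          by simp
        define U1 where "U1 = (A i - {x1}) \<union> \<Union>(A ` G1)"
        define U2 where "U2 = (A i - {x2}) \<union> \<Union>(A ` G2)"
        have U1eq: "\<Union>(A1 ` F1) = U1"
        proof -
          have "F1 = insert i G1" using iF1 G1_def by auto
          then show ?thesis unfolding U1_def A1_def G1_def by auto
        qed
        have U2eq: "\<Union>(A2 ` F2) = U2"
        proof -
          have "F2 = insert i G2" using iF2 G2_def by auto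
          then show ?thesis unfolding U2_def A2_def G2_def by auto
        qed
        have G1I: "G1 \<subseteq> I" "G2 \<subseteq> I" using F1 F2 G1_def G2_def by auto
        have finU: "finite U1" "finite U2"
          unfolding U1_def U2_def using fin i G1I finG1 by (auto intro!: finite_UN_I)
        have cU1: "card U1 \<le> card G1" using F1 U1eq cF1 by simp
        have cU2: "card U2 \<le> card G2" using F2 U2eq cF2 by simp
        have sub1: "\<Union>(A ` insert i (G1 \<union> G2)) \<subseteq> U1 \<union> U2"
          unfolding U1_def U2_def using x2 by auto
        have sub2: "\<Union>(A ` (G1 \<inter> G2)) \<subseteq> U1 \<inter> U2"
          unfolding U1_def U2_def by auto
        have iG: "i \<notin> G1 \<union> G2" using G1_def G2_def by auto
        have h1: "card (insert i (G1 \<union> G2)) \<le> card (\<Union>(A ` insert i (G1 \<union> G2)))"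
          using H[rule_format, of "insert i (G1 \<union> G2)"] G1I i by simp
        have h1': "card (\<Union>(A ` insert i (G1 \<union> G2))) \<le> card (U1 \<union> U2)"
          using sub1 finU by (intro card_mono) auto
        have h2: "card (G1 \<inter> G2) \<le> card (\<Union>(A ` (G1 \<inter> G2)))"
          using H[rule_format, of "G1 \<inter> G2"] G1I by auto
        have h2': "card (\<Union>(A ` (G1 \<inter> G2))) \<le> card (U1 \<inter> U2)"
          using sub2 finU by (intro card_mono) auto
        have ci: "card (insert i (G1 \<union> G2)) = card (G1 \<union> G2) + 1"
          using iG finG1 by simp
        have e1: "card U1 + card U2 = card (U1 \<union> U2) + card (U1 \<inter> U2)"
          using finU card_Un_Int by blast
        have e2: "card G1 + card G2 = card (G1 \<union> G2) + card (G1 \<inter> G2)"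
          using finG1 card_Un_Int by blast
        show False using h1 h1' h2 h2' ci e1 e2 cU1 cU2 by linarith
      qed
      have A1sub: "A1 j \<subseteq> A j" "A2 j \<subseteq> A j" for j unfolding A1_def A2_def by auto
      have lt1: "(\<Sum>j\<in>I. card (A1 j)) < n"
        unfolding sn[symmetric]
      proof (rule sum_strict_mono_ex1[OF finI])
        show "\<forall>x\<in>I. card (A1 x) \<le> card (A x)" using A1sub fin by (simp add: card_mono)
        show "\<exists>a\<in>I. card (A1 a) < card (A a)"
          using i x1 fin unfolding A1_def by (intro bexI[of _ i]) (auto simp: card_Diff1_less)
      qed
      have lt2: "(\<Sum>j\<in>I. card (A2 j)) < n"
        unfolding sn[symmetric]
      proof (rule sum_strict_mono_ex1[OF finI])
        show "\<forall>x\<in>I. card (A2 x) \<le> card (A x)" using A1sub fin by (simp add: card_mono)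
        show "\<exists>a\<in>I. card (A2 a) < card (A a)"
          using i x2 fin unfolding A2_def by (intro bexI[of _ i]) (auto simp: card_Diff1_less)
      qed
      have finA1: "\<forall>j\<in>I. finite (A1 j)" "\<forall>j\<in>I. finite (A2 j)"
        using fin unfolding A1_def A2_def by auto
      from key show ?thesis
      proof
        assume k1: "\<forall>F\<subseteq>I. card F \<le> card (\<Union>(A1 ` F))"
        obtain f where "\<forall>j\<in>I. f j \<in> A1 j" "inj_on f I"
          using less.IH[OF lt1] finA1(1) k1 by blast
        then show ?thesis using A1sub by blast
      next
        assume k2: "\<forall>F\<subseteq>I. card F \<le> card (\<Union>(A2 ` F))"
        obtain f where "\<forall>j\<in>I. f j \<in> A2 j" "inj_on f I"
          using less.IH[OF lt2] finA1(2) k2 by blast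
        then show ?thesis using A1sub by blast
      qed
    qed
  qed
qed

lemma hall:
  assumes "finite I" "\<forall>i\<in>I. finite (A i)" "\<forall>F\<subseteq>I. card F \<le> card (\<Union>(A ` F))"
  shows "\<exists>f. (\<forall>i\<in>I. f i \<in> A i) \<and> inj_on f I"
  using hall_aux[OF assms(1)] assms(2,3) by blast

lemma hall_cap:
  fixes N :: "'a \<Rightarrow> 'b set"
  assumes finI: "finite I" and finN: "\<forall>i\<in>I. finite (N i)"
    and H: "\<forall>F\<subseteq>I. card F \<le> c * card (\<Union>(N ` F))"
  shows "\<exists>f. (\<forall>i\<in>I. f i \<in> N i) \<and> (\<forall>w. card {i\<in>I. f i = w} \<le> c)"
proof -
  define B where "B i = N i \<times> {..<c}" for i
  have UB: "\<Union>(B ` F) = (\<Union>(N ` F)) \<times> {..<c}" for F unfolding B_def by auto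
  have "\<forall>F\<subseteq>I. card F \<le> card (\<Union>(B ` F))"
    unfolding UB by (simp add: card_cartesian_product H mult.commute)
  moreover have "\<forall>i\<in>I. finite (B i)" using finN unfolding B_def by auto
  ultimately obtain g where g: "\<forall>i\<in>I. g i \<in> B i" "inj_on g I" using hall[OF finI] by blast
  define f where "f i = fst (g i)" for i
  have "card {i\<in>I. f i = w} \<le> c" for w
  proof -
    have "inj_on (\<lambda>i. snd (g i)) {i\<in>I. f i = w}"
    proof (rule inj_onI)
      fix a b assume ab: "a \<in> {i\<in>I. f i = w}" "b \<in> {i\<in>I. f i = w}" "snd (g a) = snd (g b)"
      then have "g a = g b" unfolding f_def by (simp add: prod_eq_iff)
      then show "a = b" using g(2) ab inj_onD by fastforce
    qed
    moreover have "(\<lambda>i. snd (g i)) ` {i\<in>I. f i = w} \<subseteq> {..<c}" using g(1) unfolding B_def by auto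
    ultimately show ?thesis using card_inj_on_le by (metis card_lessThan finite_lessThan)
  qed
  moreover have "\<forall>i\<in>I. f i \<in> N i" using g(1) unfolding B_def f_def by auto
  ultimately show ?thesis by blast
qed


lemma upper:
  fixes V :: "nat set" and G :: "nat \<Rightarrow> nat \<Rightarrow> nat \<Rightarrow> bool"
  assumes finV: "finite V" and kd: "2 * d + 1 \<le> k"
    and GG: "\<forall>i<k. star_forest V (G i) \<and> max_deg_le V (G i) d"
  shows "coop_coloring V G k"
proof -
  define deg where "deg i v = card {u\<in>V. G i v u}" for i v
  have gr: "graph_on V (G i)" if "i < k" for i using GG that unfolding star_forest_def by blast
  have inV: "G i u v \<Longrightarrow> i < k \<Longrightarrow> u \<in> V \<and> v \<in> V" for i u v
    using gr unfolding graph_on_def by blast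
  have sym: "G i u v \<Longrightarrow> i < k \<Longrightarrow> G i v u" for i u v
    using gr unfolding graph_on_def by blast
  have irr: "i < k \<Longrightarrow> \<not> G i u u" for i u
    using gr unfolding graph_on_def by blast
  have degd: "i < k \<Longrightarrow> v \<in> V \<Longrightarrow> deg i v \<le> d" for i v
    using GG unfolding max_deg_le_def deg_def by blast
  have SFb: "\<not> (2 \<le> deg i u \<and> 2 \<le> deg i w)" if "i < k" "G i u w" for i u w
  proof
    assume "2 \<le> deg i u \<and> 2 \<le> deg i w"
    moreover have "star_forest V (G i)" using GG that(1) by blast
    ultimately show False using sf_no_big_edge[of V "G i" u w] finV that(2) unfolding deg_def by blast
  qed
  have uq: "a = b" if "deg i v \<le> 1" "G i v a" "G i v b" "i < k" for i v a b
  proof -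
    have "finite {u\<in>V. G i v u}" using finV by auto
    then show ?thesis using that inV card_le_Suc0_iff_eq[of "{u\<in>V. G i v u}"] unfolding deg_def
      by auto
  qed
  have deg1: "1 \<le> deg i v" if "G i v a" "i < k" for i v a
  proof -
    have "a \<in> {u\<in>V. G i v u}" using that inV by auto
    moreover have "finite {u\<in>V. G i v u}" using finV by auto
    ultimately show ?thesis unfolding deg_def by (metis card_0_eq empty_iff less_one not_le)
  qed
  define Cen where "Cen i v \<longleftrightarrow> 2 \<le> deg i v \<or> (\<exists>u. G i v u \<and> deg i v \<le> 1 \<and> deg i u \<le> 1 \<and> v < u)" for i v
  have P1: "\<not> (Cen i u \<and> Cen i w)" if "i < k" "G i u w" for i u w
  proof
    assume c: "Cen i u \<and> Cen i w"
    have wu: "G i w u" using sym that by blast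
    show False
    proof (cases "2 \<le> deg i u")
      case True
      show False
      proof (cases "2 \<le> deg i w")
        case True
        then show False using SFb that \<open>2 \<le> deg i u\<close> by blast
      next
        case False
        then obtain x where x: "G i w x" "deg i w \<le> 1" "deg i x \<le> 1" using c unfolding Cen_def by auto
        then have "x = u" using uq wu that by blast
        then show False using x True by simp
      qed
    next
      case False
      then obtain x where x: "G i u x" "deg i u \<le> 1" "deg i x \<le> 1" "u < x" using c unfolding Cen_def by auto
      then have xw: "x = w" using uq that by blast
      show False
      proof (cases "2 \<le> deg i w")
        case True then show False using x xw by simp
      next
        case False
        then obtain y where y: "G i w y" "deg i w \<le> 1" "deg i y \<le> 1" "w < y" using c unfolding Cen_def by auto
        then have "y = u" using uq wu that by blast
        then show False using x xw y by simp
      qed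
    qed
  qed
  have P2: "Cen i u \<or> Cen i w" if "i < k" "G i u w" for i u w
  proof (cases "2 \<le> deg i u \<or> 2 \<le> deg i w")
    case True then show ?thesis unfolding Cen_def by blast
  next
    case False
    then have "deg i u \<le> 1" "deg i w \<le> 1" by auto
    moreover have "u \<noteq> w" using irr that by blast
    moreover have "G i w u" using sym that by blast
    ultimately show ?thesis unfolding Cen_def using that by (metis linorder_neqE_nat)
  qed
  have P3: "a = b" if "i < k" "\<not> Cen i v" "G i v a" "G i v b" for i v a b
  proof -
    have "deg i v \<le> 1" using that(2) unfolding Cen_def by auto
    then show ?thesis using uq that by blast
  qed
  define Lset where "Lset v = {i. i < k \<and> \<not> Cen i v}" for v
  define Cset where "Cset v = {i. i < k \<and> Cen i v}" for v
  have LC: "card (Lset v) + card (Cset v) = k" for v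
  proof -
    have "Lset v \<union> Cset v = {..<k}" "Lset v \<inter> Cset v = {}" unfolding Lset_def Cset_def by auto
    moreover have "finite (Lset v)" "finite (Cset v)" unfolding Lset_def Cset_def by auto
    ultimately show ?thesis using card_Un_disjoint by (metis card_lessThan)
  qed
  define Z where "Z = {v\<in>V. d + 1 \<le> card (Lset v)}"
  define X where "X = {v\<in>V. \<not> d + 1 \<le> card (Lset v)}"
  have XC: "d + 1 \<le> card (Cset v)" if "v \<in> X" for v using that LC[of v] kd unfolding X_def by auto
  have "\<forall>w\<in>X. \<exists>T. T \<subseteq> Cset w \<and> card T = d + 1"
    using XC obtain_subset_with_card_n by metis
  then obtain S where S: "\<And>w. w \<in> X \<Longrightarrow> S w \<subseteq> Cset w \<and> card (S w) = d + 1" by metis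
  define Hard where "Hard = {v\<in>Z. \<forall>i\<in>Lset v. \<exists>w\<in>X. G i v w \<and> i \<in> S w}"
  define N where "N v = {w\<in>X. \<exists>i\<in>Lset v. G i v w \<and> i \<in> S w}" for v
  have finX: "finite X" using finV unfolding X_def by auto
  have finHard: "finite Hard" using finV unfolding Hard_def Z_def by auto
  have finN: "\<forall>v\<in>Hard. finite (N v)" using finX unfolding N_def by auto
  have finL: "finite (Lset v)" for v unfolding Lset_def by auto
  have finS: "finite (S w)" if "w \<in> X" for w
  proof -
    have "card (S w) = d + 1" using S that by blast
    then show ?thesis by (intro card_ge_0_finite) simp
  qed
  have Hcond: "\<forall>F\<subseteq>Hard. card F \<le> d * card (\<Union>(N ` F))"
  proof (intro allI impI)
    fix F assume F: "F \<subseteq> Hard"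
    have finF: "finite F" using F finHard finite_subset by blast
    define M where "M = \<Union>(N ` F)"
    have finM: "finite M" using finN F finF unfolding M_def by auto
    have MX: "M \<subseteq> X" unfolding M_def N_def by auto
    define P where "P = Sigma F Lset"
    define Q where "Q = Sigma M S"
    have cP: "card P = (\<Sum>v\<in>F. card (Lset v))" unfolding P_def using finF finL by simp
    have cP2: "card F * (d + 1) \<le> card P"
    proof -
      have "(\<Sum>v\<in>F. card (Lset v)) \<ge> card F * (d+1)"
        using sum_bounded_below[of F "d+1" "\<lambda>v. card (Lset v)"] F unfolding Hard_def Z_def by auto
      then show ?thesis using cP by simp
    qed
    have cQ: "card Q = card M * (d + 1)"
    proof -
      have "\<forall>w\<in>M. finite (S w)" using finS MX by blast
      then have "card Q = (\<Sum>w\<in>M. card (S w))" unfolding Q_def using finM card_SigmaI by blast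
      also have "\<dots> = (\<Sum>w\<in>M. d + 1)" using S MX by (intro sum.cong) auto
      finally show ?thesis by simp
    qed
    have finQ: "finite Q" unfolding Q_def using finM finS MX by (meson finite_SigmaI subsetD)
    have sub: "P \<subseteq> (\<Union>q\<in>Q. {v\<in>V. G (snd q) (fst q) v} \<times> {snd q})"
    proof
      fix p assume p: "p \<in> P"
      obtain v i where vi: "p = (v, i)" "v \<in> F" "i \<in> Lset v" using p unfolding P_def by auto
      then obtain w where w: "w \<in> X" "G i v w" "i \<in> S w" using F unfolding Hard_def by blast
      have ik: "i < k" using vi unfolding Lset_def by auto
      have "w \<in> N v" using w vi unfolding N_def by auto
      then have "(w, i) \<in> Q" using w vi unfolding Q_def M_def by auto
      moreover have "v \<in> {v\<in>V. G i w v}" using w ik inV sym by blast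
      ultimately show "p \<in> (\<Union>q\<in>Q. {v\<in>V. G (snd q) (fst q) v} \<times> {snd q})" using vi by force
    qed
    have "card P \<le> card (\<Union>q\<in>Q. {v\<in>V. G (snd q) (fst q) v} \<times> {snd q})"
      using sub finQ finV by (intro card_mono) auto
    also have "\<dots> \<le> (\<Sum>q\<in>Q. card ({v\<in>V. G (snd q) (fst q) v} \<times> {snd q}))"
      using card_UN_le[OF finQ] by blast
    also have "\<dots> \<le> (\<Sum>q\<in>Q. d)"
    proof (rule sum_mono)
      fix q assume q: "q \<in> Q"
      then have qM: "fst q \<in> M" "snd q \<in> S (fst q)" unfolding Q_def by auto
      then have "fst q \<in> X" using MX by blast
      then have "snd q \<in> Cset (fst q)" "fst q \<in> V" using S qM unfolding X_def by blast+
      then have "snd q < k" "fst q \<in> V" unfolding Cset_def by auto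
      then have "deg (snd q) (fst q) \<le> d" using degd by blast
      then show "card ({v\<in>V. G (snd q) (fst q) v} \<times> {snd q}) \<le> d"
        unfolding deg_def by (simp add: card_cartesian_product)
    qed
    also have "\<dots> = d * card Q" by simp
    finally have "card F * (d + 1) \<le> d * (card M * (d + 1))" using cP2 cQ by simp
    then have "card F * (d + 1) \<le> (d * card M) * (d + 1)" by (simp only: mult.assoc)
    then have "card F \<le> d * card M" using mult_le_cancel2[of "card F" "d + 1" "d * card M"] by simp
    then show "card F \<le> d * card (\<Union>(N ` F))" unfolding M_def .
  qed
  obtain f where f: "\<forall>v\<in>Hard. f v \<in> N v" "\<forall>w. card {v\<in>Hard. f v = w} \<le> d"
    using hall_cap[OF finHard finN Hcond] by blast
  define colH where "colH v = (SOME i. i \<in> Lset v \<and> G i v (f v) \<and> i \<in> S (f v))" for v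
  have colH: "colH v \<in> Lset v \<and> G (colH v) v (f v) \<and> colH v \<in> S (f v)" if "v \<in> Hard" for v
  proof -
    have "\<exists>i. i \<in> Lset v \<and> G i v (f v) \<and> i \<in> S (f v)" using f(1) that unfolding N_def by blast
    then show ?thesis unfolding colH_def by (rule someI_ex)
  qed
  define col where "col v = (if v \<in> Hard then colH v
     else if v \<in> Z then (SOME i. i \<in> Lset v \<and> \<not> (\<exists>w\<in>X. G i v w \<and> i \<in> S w))
     else (SOME i. i \<in> S v \<and> i \<notin> colH ` {u\<in>Hard. f u = v}))" for v
  have colHard: "v \<in> Hard \<Longrightarrow> col v = colH v" for v unfolding col_def by simp
  have colEasy: "col v \<in> Lset v \<and> \<not> (\<exists>w\<in>X. G (col v) v w \<and> col v \<in> S w)"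
    if "v \<in> Z" "v \<notin> Hard" for v
  proof -
    have ex: "\<exists>i. i \<in> Lset v \<and> \<not> (\<exists>w\<in>X. G i v w \<and> i \<in> S w)" using that unfolding Hard_def by blast
    have c: "col v = (SOME i. i \<in> Lset v \<and> \<not> (\<exists>w\<in>X. G i v w \<and> i \<in> S w))"
      using that unfolding col_def by simp
    show ?thesis unfolding c by (rule someI_ex[OF ex])
  qed
  have colX: "col v \<in> S v \<and> col v \<notin> colH ` {u\<in>Hard. f u = v}" if "v \<in> X" for v
  proof -
    have nZ: "v \<notin> Z" "v \<notin> Hard" using that unfolding X_def Z_def Hard_def by auto
    have fin1: "finite {u\<in>Hard. f u = v}" using finHard by simp
    have "card (colH ` {u\<in>Hard. f u = v}) \<le> card {u\<in>Hard. f u = v}" using card_image_le[OF fin1] .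
    moreover have "card {u\<in>Hard. f u = v} \<le> d" using f(2) by blast
    ultimately have "card (colH ` {u\<in>Hard. f u = v}) < card (S v)" using S[OF that] by linarith
    then have "\<not> S v \<subseteq> colH ` {u\<in>Hard. f u = v}"
      using card_mono[OF finite_imageI[OF fin1, of colH], of "S v"] by linarith
    then have ex: "\<exists>i. i \<in> S v \<and> i \<notin> colH ` {u\<in>Hard. f u = v}" by blast
    have c: "col v = (SOME i. i \<in> S v \<and> i \<notin> colH ` {u\<in>Hard. f u = v})"
      using nZ unfolding col_def by simp
    show ?thesis unfolding c by (rule someI_ex[OF ex])
  qed
  have VZX: "v \<in> V \<Longrightarrow> v \<in> Z \<or> v \<in> X" for v unfolding Z_def X_def by auto
  have ZX: "v \<in> Z \<Longrightarrow> v \<notin> X" for v unfolding Z_def X_def by auto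
  have HZ: "v \<in> Hard \<Longrightarrow> v \<in> Z" for v unfolding Hard_def by auto
  have colZ: "col v \<in> Lset v" if "v \<in> Z" for v
  proof (cases "v \<in> Hard")
    case True
    then show ?thesis using colH[OF True] colHard[OF True] by simp
  next
    case False
    then show ?thesis using colEasy[OF that False] by simp
  qed
  have colXC: "col v \<in> Cset v" if "v \<in> X" for v
  proof -
    have "col v \<in> S v" using colX[OF that] by simp
    then show ?thesis using S[OF that] by blast
  qed
  have colk: "col v < k" if "v \<in> V" for v
  proof (cases "v \<in> Z")
    case True then show ?thesis using colZ[OF True] unfolding Lset_def by simp
  next
    case False then have "v \<in> X" using VZX that by blast
    then show ?thesis using colXC unfolding Cset_def by blast
  qed
  have noconf: False if "a \<in> Z" "b \<in> X" "G i a b" "col a = i" "col b = i" for a b i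
  proof (cases "a \<in> Hard")
    case True
    have cl: "col a \<in> Lset a" using colZ[OF that(1)] .
    then have ik: "i < k" "\<not> Cen i a" using that(4) unfolding Lset_def by auto
    have "G (colH a) a (f a)" using colH[OF True] by simp
    then have "G i a (f a)" using colHard[OF True] that(4) by simp
    then have "f a = b" using P3[OF ik(1) ik(2)] that(3) by blast
    then have "colH a \<in> colH ` {u\<in>Hard. f u = b}" using True by blast
    then have "col a \<in> colH ` {u\<in>Hard. f u = b}" using colHard[OF True] by simp
    moreover have "col b \<notin> colH ` {u\<in>Hard. f u = b}" using colX[OF that(2)] by simp
    ultimately show False using that(4,5) by simp
  next
    case False
    have e: "\<not> (\<exists>w\<in>X. G (col a) a w \<and> col a \<in> S w)" using colEasy[OF that(1) False] by simp
    have "col b \<in> S b" using colX[OF that(2)] by simp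
    then have "G (col a) a b \<and> col a \<in> S b" using that by simp
    then show False using e that(2) by blast
  qed
  define R where "R i = {v\<in>V. col v = i}" for i
  have Zc: "\<not> Cen (col x) x" if "x \<in> Z" for x using colZ[OF that] unfolding Lset_def by simp
  have Xc: "Cen (col x) x" if "x \<in> X" for x using colXC[OF that] unfolding Cset_def by simp
  show ?thesis unfolding coop_coloring_def
  proof (intro exI conjI allI impI)
    fix i assume ik: "i < k"
    show "R i \<subseteq> V" unfolding R_def by auto
    show "independent (G i) (R i)" unfolding independent_def
    proof (intro ballI notI)
      fix u v assume uv: "u \<in> R i" "v \<in> R i" "G i u v"
      have cu: "col u = i" "col v = i" "u \<in> V" "v \<in> V" using uv unfolding R_def by auto
      show False
      proof (cases "u \<in> Z")
        case True
        then have "\<not> Cen i u" using Zc[OF True] cu(1) by simp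
        then have "Cen i v" using P2[OF ik uv(3)] by blast
        then have "v \<notin> Z" using Zc cu(2) by blast
        then have "v \<in> X" using VZX cu(4) by blast
        then show False using noconf[OF True _ uv(3) cu(1) cu(2)] by blast
      next
        case False
        then have uX: "u \<in> X" using VZX cu(3) by blast
        then have "Cen i u" using Xc[OF uX] cu(1) by simp
        then have "\<not> Cen i v" using P1[OF ik uv(3)] by blast
        then have "v \<notin> X" using Xc cu(2) by blast
        then have vZ: "v \<in> Z" using VZX cu(4) by blast
        have "G i v u" using sym[OF uv(3) ik] .
        then show False using noconf[OF vZ uX _ cu(2) cu(1)] by blast
      qed
    qed
  next
    show "V = (\<Union>i<k. R i)" unfolding R_def using colk by auto
  qed
qed


definition Seqs :: "nat \<Rightarrow> nat list set" where "Seqs k = {xs. distinct xs \<and> set xs \<subseteq> {..<k}}"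
definition VV :: "nat \<Rightarrow> nat set" where "VV k = (to_nat :: nat list \<Rightarrow> nat) ` Seqs k"
definition fn :: "nat \<Rightarrow> nat list" where "fn a = from_nat a"
definition adjL :: "nat \<Rightarrow> nat list \<Rightarrow> nat list \<Rightarrow> bool" where "adjL i s t \<longleftrightarrow> (\<exists>r. t = s @ i # r)"
definition GG :: "nat \<Rightarrow> nat \<Rightarrow> nat \<Rightarrow> nat \<Rightarrow> bool" where
  "GG k i a b \<longleftrightarrow> a \<in> VV k \<and> b \<in> VV k \<and> (adjL i (fn a) (fn b) \<or> adjL i (fn b) (fn a))"

lemma fn_to: "fn (to_nat (s :: nat list)) = s" unfolding fn_def by simp

lemma VV_fn: "a \<in> VV k \<Longrightarrow> fn a \<in> Seqs k \<and> to_nat (fn a) = a"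
  unfolding VV_def using fn_to by auto

lemma GG_sf: "star_forest (VV k) (GG k i)"
proof (rule star_forest_crit[where cen = "\<lambda>a. i \<notin> set (fn a)"])
  show "graph_on (VV k) (GG k i)" unfolding graph_on_def GG_def adjL_def by auto
next
  fix u v assume uv: "GG k i u v"
  then have s: "fn u \<in> Seqs k" "fn v \<in> Seqs k" using VV_fn unfolding GG_def by auto
  from uv show "(i \<notin> set (fn u)) \<longleftrightarrow> \<not> (i \<notin> set (fn v))"
    unfolding GG_def adjL_def using s unfolding Seqs_def by auto
next
  fix u v w assume c: "\<not> i \<notin> set (fn u)" and uv: "GG k i u v" and uw: "GG k i u w"
  have s: "fn u \<in> Seqs k" "fn v \<in> Seqs k" "fn w \<in> Seqs k" "to_nat (fn v) = v" "to_nat (fn w) = w"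
    using VV_fn uv uw unfolding GG_def by auto
  have tw: "fn x = takeWhile (\<lambda>y. y \<noteq> i) (fn u)" if g: "GG k i u x" and sx: "fn x \<in> Seqs k" for x
  proof -
    have "\<not> adjL i (fn u) (fn x)" using c s sx unfolding adjL_def Seqs_def by auto
    then obtain r where r: "fn u = fn x @ i # r" using g unfolding GG_def adjL_def by auto
    then have "i \<notin> set (fn x)" using s unfolding Seqs_def by auto
    then show ?thesis using r by (subst r, subst takeWhile_append2) auto
  qed
  have "fn v = fn w" using tw[OF uv s(2)] tw[OF uw s(3)] by simp
  then show "v = w" using s by metis
qed

lemma Seqs_sub: "Seqs k \<subseteq> {xs. set xs \<subseteq> {..<k} \<and> length xs \<le> k}"
proof
  fix xs assume "xs \<in> Seqs k"
  then have "distinct xs" "set xs \<subseteq> {..<k}" unfolding Seqs_def by auto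
  then have "length xs \<le> k" using distinct_card card_mono[of "{..<k}" "set xs"] by fastforce
  then show "xs \<in> {xs. set xs \<subseteq> {..<k} \<and> length xs \<le> k}" using \<open>set xs \<subseteq> _\<close> by auto
qed

lemma finite_Seqs: "finite (Seqs k)"
  using Seqs_sub finite_lists_length_le[of "{..<k}" k] finite_subset by blast

lemma card_Seqs: "card (Seqs k) \<le> (k+1)^(k+1)"
proof -
  have "card (Seqs k) \<le> card {xs. set xs \<subseteq> {..<k} \<and> length xs \<le> k}"
    using Seqs_sub finite_lists_length_le[of "{..<k}" k] by (intro card_mono) auto
  also have "\<dots> = (\<Sum>i\<le>k. k ^ i)" using card_lists_length_le[of "{..<k}" k] by simp
  also have "\<dots> \<le> (\<Sum>i\<le>k. k ^ k)"
  proof (rule sum_mono)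
    fix i assume "i \<in> {..k}"
    then show "k ^ i \<le> k ^ k"
      by (cases "k = 0") (auto intro: power_increasing)
  qed
  also have "\<dots> = (k+1) * k ^ k" by simp
  also have "\<dots> \<le> (k+1) * (k+1) ^ k" by (intro mult_left_mono power_mono) auto
  also have "\<dots> = (k+1)^(k+1)" by simp
  finally show ?thesis .
qed

lemma finite_VV: "finite (VV k)" unfolding VV_def using finite_Seqs by simp

lemma GG_deg: assumes "(k+1)^(k+1) \<le> d" shows "max_deg_le (VV k) (GG k i) d"
  unfolding max_deg_le_def
proof
  fix v assume "v \<in> VV k"
  have "card {u \<in> VV k. GG k i v u} \<le> card (VV k)" using finite_VV by (intro card_mono) auto
  also have "\<dots> \<le> card (Seqs k)" unfolding VV_def by (rule card_image_le[OF finite_Seqs])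
  finally show "card {u \<in> VV k. GG k i v u} \<le> d" using card_Seqs[of k] assms by linarith
qed

lemma GG_noncol: "\<not> coop_coloring (VV k) (GG k) k"
proof
  assume "coop_coloring (VV k) (GG k) k"
  then obtain R where R: "\<forall>i<k. R i \<subseteq> VV k \<and> independent (GG k i) (R i)" "VV k = (\<Union>i<k. R i)"
    unfolding coop_coloring_def by blast
  have inV: "s \<in> Seqs k \<Longrightarrow> to_nat s \<in> VV k" for s unfolding VV_def by auto
  have claim: "j \<le> k \<Longrightarrow> \<exists>\<sigma>\<in>Seqs k. length \<sigma> = j \<and>
      (\<forall>\<rho>. \<sigma> @ \<rho> \<in> Seqs k \<longrightarrow> (\<forall>i<k. to_nat (\<sigma> @ \<rho>) \<in> R i \<longrightarrow> i \<notin> set \<sigma>))" for j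
  proof (induction j)
    case 0
    show ?case by (intro bexI[of _ "[]"]) (auto simp: Seqs_def)
  next
    case (Suc j)
    then obtain \<sigma> where \<sigma>: "\<sigma> \<in> Seqs k" "length \<sigma> = j"
      "\<forall>\<rho>. \<sigma> @ \<rho> \<in> Seqs k \<longrightarrow> (\<forall>i<k. to_nat (\<sigma> @ \<rho>) \<in> R i \<longrightarrow> i \<notin> set \<sigma>)" by auto
    obtain i where i: "i < k" "to_nat \<sigma> \<in> R i" using R(2) inV[OF \<sigma>(1)] by auto
    have "i \<notin> set \<sigma>" using \<sigma>(3)[rule_format, of "[]"] \<sigma>(1) i by simp
    then have s': "\<sigma> @ [i] \<in> Seqs k" using \<sigma>(1) i unfolding Seqs_def by auto
    show ?case
    proof (intro bexI[OF _ s'] conjI allI impI)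
      show "length (\<sigma> @ [i]) = Suc j" using \<sigma> by simp
      fix \<rho> i' assume r: "(\<sigma> @ [i]) @ \<rho> \<in> Seqs k" and i': "i' < k" "to_nat ((\<sigma> @ [i]) @ \<rho>) \<in> R i'"
      have a: "i' \<notin> set \<sigma>" using \<sigma>(3)[rule_format, of "i # \<rho>"] r i' by simp
      have "i' \<noteq> i"
      proof
        assume "i' = i"
        then have "GG k i (to_nat \<sigma>) (to_nat ((\<sigma> @ [i]) @ \<rho>))"
          unfolding GG_def adjL_def fn_to using inV[OF \<sigma>(1)] inV[OF r] by auto
        then show False using R(1) i i' \<open>i' = i\<close> unfolding independent_def by blast
      qed
      then show "i' \<notin> set (\<sigma> @ [i])" using a by simp
    qed
  qed
  obtain \<sigma> where \<sigma>: "\<sigma> \<in> Seqs k" "length \<sigma> = k"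
      "\<forall>\<rho>. \<sigma> @ \<rho> \<in> Seqs k \<longrightarrow> (\<forall>i<k. to_nat (\<sigma> @ \<rho>) \<in> R i \<longrightarrow> i \<notin> set \<sigma>)"
    using claim[of k] by auto
  have "set \<sigma> = {..<k}"
  proof -
    have "card (set \<sigma>) = k" using \<sigma> distinct_card unfolding Seqs_def by auto
    then show ?thesis using \<sigma>(1) unfolding Seqs_def by (intro card_subset_eq) auto
  qed
  moreover obtain i where "i < k" "to_nat \<sigma> \<in> R i" using R(2) inV[OF \<sigma>(1)] by auto
  ultimately show False using \<sigma>(3)[rule_format, of "[]"] \<sigma>(1) by simp
qed


lemma mS_good_ex: "mS_good d (2 * d + 1)"
  unfolding mS_good_def using upper by blast

lemma mS_ge: assumes "(k+1)^(k+1) \<le> d" shows "k + 1 \<le> mS d"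
proof (rule ccontr)
  assume "\<not> k + 1 \<le> mS d"
  then have le: "mS d \<le> k" by simp
  have g: "mS_good d (mS d)" unfolding mS_def by (rule LeastI[of _ "2 * d + 1"]) (rule mS_good_ex)
  have "\<forall>i<k. star_forest (VV k) (GG k i) \<and> max_deg_le (VV k) (GG k i) d"
    using GG_sf GG_deg[OF assms] by blast
  then have "coop_coloring (VV k) (GG k) k" using g le finite_VV unfolding mS_good_def by blast
  then show False using GG_noncol by blast
qed

lemma exk: assumes "1 \<le> d" shows "\<exists>k. (k+1)^(k+1) \<le> d \<and> d < (k+2)^(k+2)"
proof -
  define n where "n = (LEAST n. d < (n+1)^(n+1))"
  have ex: "d < (d+1)^(d+1)"
  proof -
    have "d + 1 \<le> (d+1)^(d+1)" by (rule self_le_power) auto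
    then show ?thesis by simp
  qed
  have n1: "d < (n+1)^(n+1)" unfolding n_def by (rule LeastI[of _ d]) (rule ex)
  have n0: "n \<noteq> 0"
  proof
    assume "n = 0" then show False using n1 assms by simp
  qed
  define k where "k = n - 1"
  have kn: "n = k + 1" using n0 k_def by simp
  have "\<not> d < (k+1)^(k+1)" using not_less_Least[of k "\<lambda>n. d < (n+1)^(n+1)"] kn unfolding n_def by simp
  moreover have "d < (k+2)^(k+2)" using n1 kn by (simp add: add.commute)
  ultimately show ?thesis by (intro exI[of _ k]) simp
qed

theorem theorem1:
  shows "\<exists>\<epsilon> :: nat \<Rightarrow> real. \<epsilon> \<longlonglongrightarrow> 0 \<and>
    (\<forall>\<^sub>F d in sequentially. real (mS d) \<ge> (1 + \<epsilon> d) * ln (real d) / ln (ln (real d)))"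
proof (intro exI conjI)
  show "(\<lambda>d. - ln (ln (real d)) / ln (real d)) \<longlonglongrightarrow> 0" by real_asymp
  show "\<forall>\<^sub>F d in sequentially. real (mS d) \<ge> (1 + - ln (ln (real d)) / ln (real d)) * ln (real d) / ln (ln (real d))"
    unfolding eventually_sequentially
  proof (intro exI allI impI)
    fix d assume dN: "d \<ge> nat \<lceil>exp (exp (1::real))\<rceil>"
    have dr: "real d \<ge> exp (exp (1::real))"
    proof -
      have "real (nat \<lceil>exp (exp (1::real))\<rceil>) \<le> real d" using dN by (simp only: of_nat_le_iff)
      then show ?thesis using real_nat_ceiling_ge[of "exp (exp (1::real))"] by linarith
    qed
    have "exp (exp (1::real)) > (1::real)" by simp
    then have d1: "1 \<le> d" using dr by linarith
    define y where "y = ln (real d)"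
    have y1: "y \<ge> exp 1"
    proof -
      have "ln (exp (exp (1::real))) \<le> ln (real d)" using dr d1 by (subst ln_le_cancel_iff) auto
      then show ?thesis unfolding y_def by simp
    qed
    have ypos: "y > 0" using y1 exp_gt_zero[of 1] by linarith
    have ly: "ln y \<ge> 1"
    proof -
      have "ln (exp (1::real)) \<le> ln y" using y1 ypos by (subst ln_le_cancel_iff) auto
      then show ?thesis by simp
    qed
    obtain k where k: "(k+1)^(k+1) \<le> d" "d < (k+2)^(k+2)" using exk[OF d1] by blast
    have mk: "real k + 1 \<le> real (mS d)" using mS_ge[OF k(1)] by linarith
    have "real d < real ((k+2)^(k+2))" using k(2) by linarith
    then have "y < ln (real ((k+2)^(k+2)))" unfolding y_def using d1 by (intro ln_less_cancel_iff[THEN iffD2]) auto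
    also have "\<dots> = ln ((real (k+2))^(k+2))" by (simp only: of_nat_power)
    also have "\<dots> = real (k+2) * ln (real (k+2))" by (rule ln_realpow)
    finally have yk: "y < real (k+2) * ln (real (k+2))" .
    have lk: "ln (real (k+2)) > 0" by simp
    have bound: "y / ln y \<le> real k + 2"
    proof (cases "y \<ge> real (k+2)")
      case True
      then have "ln y \<ge> ln (real (k+2))" by simp
      then have "y / ln y \<le> y / ln (real (k+2))" using ypos lk by (intro divide_left_mono) auto
      also have "\<dots> < real (k+2)" using yk lk by (simp add: divide_less_eq)
      finally show ?thesis by simp
    next
      case False
      have lyp: "0 < ln y * 1" using ly by linarith
      have "y / ln y \<le> y / 1" using ly ypos lyp by (intro divide_left_mono) (linarith, linarith, assumption)
      then show ?thesis using False by simp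
    qed
    have eq: "(1 + - ln (ln (real d)) / ln (real d)) * ln (real d) / ln (ln (real d)) = y / ln y - 1"
    proof -
      have a1: "(1 + - ln y / y) * y = y - ln y" using ypos by (simp add: field_simps)
      have ln0: "ln y \<noteq> 0" using ly by linarith
      have "(1 + - ln y / y) * y / ln y = (y - ln y) / ln y" using a1 by simp
      also have "\<dots> = y / ln y - 1" using ln0 by (simp add: diff_divide_distrib)
      finally show ?thesis unfolding y_def[symmetric] .
    qed
    show "real (mS d) \<ge> (1 + - ln (ln (real d)) / ln (real d)) * ln (real d) / ln (ln (real d))"
      unfolding eq using bound mk by linarith
  qed
qed

end
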